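(* Let $X$ be a finite set of proposals with $m=|X|$. Every divisiveness selection function $\Delta$ on $X$ that satisfies both Anonymity and Neutrality also satisfies Uniformity, i.e., $\Delta(R^U)=X$ for every perfectly uniform profile $R^U$.
   Context: Let $X$ be a finite set of proposals, $m=|X|$, and let $X!$ denote the set of all strict linear orders on $X$. A profile is a function $R:N\to X!$ where $N\subset\mathbb{N}$ is a finite nonempty set of agents (the electorate); write $R_i=R(i)$. A divisiveness selection function (DSF) is a function $\Delta$ mapping every profile (for every finite nonempty $N\subset\mathbb{N}$) to a nonempty subset of $X$. Anonymity: $\Delta(R)=\Delta(R\circ\sigma)$ for every profile $R$ and every bijection $\sigma:\mathbb{N}\to\mathbb{N}$ (so $R\circ\sigma$ is the profile obtained by letting agents exchange preferences, possibly with agents outside $N$). Neutrality: $\Delta(\sigma(R))=\sigma(\Delta(R))$ for every profile $R$ and every permutation $\sigma:X\to X$, where $\sigma$ is extended in the natural way to subsets of $X$ and to profiles (renaming proposals in every ranking). A profile is perfectly uniform if each of the $m!$ linear orders on $X$ occurs in it equally often (i.e., is reported by the same number of agents). *)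

theory Defs
  imports "HOL-Combinatorics.Permutations"
begin

text \<open>Strict linear orders on the finite set of proposals X, as relations contained in X \<times> X.
  The pair (x, y) in r means that x is ranked above y.\<close>
definition lin_orders :: "'a set \<Rightarrow> 'a rel set" where
  "lin_orders X = {r. r \<subseteq> X \<times> X \<and> strict_linear_order_on X r}"

text \<open>A profile is a partial map from agents (natural numbers) to strict linear orders on X,
  whose domain (the electorate N) is finite and nonempty.\<close>
type_synonym 'a profile = "nat \<Rightarrow> 'a rel option"

definition is_profile :: "'a set \<Rightarrow> 'a profile \<Rightarrow> bool" where
  "is_profile X R \<longleftrightarrow> finite (dom R) \<and> dom R \<noteq> {} \<and> ran R \<subseteq> lin_orders X"

definition is_DSF :: "'a set \<Rightarrow> ('a profile \<Rightarrow> 'a set) \<Rightarrow> bool" where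
  "is_DSF X \<Delta> \<longleftrightarrow> (\<forall>R. is_profile X R \<longrightarrow> \<Delta> R \<noteq> {} \<and> \<Delta> R \<subseteq> X)"

definition anonymous :: "'a set \<Rightarrow> ('a profile \<Rightarrow> 'a set) \<Rightarrow> bool" where
  "anonymous X \<Delta> \<longleftrightarrow> (\<forall>R \<sigma>. is_profile X R \<and> bij (\<sigma> :: nat \<Rightarrow> nat) \<longrightarrow> \<Delta> (R \<circ> \<sigma>) = \<Delta> R)"

definition rename_order :: "('a \<Rightarrow> 'a) \<Rightarrow> 'a rel \<Rightarrow> 'a rel" where
  "rename_order \<sigma> r = (\<lambda>(x, y). (\<sigma> x, \<sigma> y)) ` r"

definition rename_profile :: "('a \<Rightarrow> 'a) \<Rightarrow> 'a profile \<Rightarrow> 'a profile" where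
  "rename_profile \<sigma> R = map_option (rename_order \<sigma>) \<circ> R"

definition neutral :: "'a set \<Rightarrow> ('a profile \<Rightarrow> 'a set) \<Rightarrow> bool" where
  "neutral X \<Delta> \<longleftrightarrow> (\<forall>R \<sigma>. is_profile X R \<and> \<sigma> permutes X \<longrightarrow> \<Delta> (rename_profile \<sigma> R) = \<sigma> ` \<Delta> R)"

definition perfectly_uniform :: "'a set \<Rightarrow> 'a profile \<Rightarrow> bool" where
  "perfectly_uniform X R \<longleftrightarrow> is_profile X R \<and>
     (\<forall>r \<in> lin_orders X. \<forall>s \<in> lin_orders X. card {i. R i = Some r} = card {i. R i = Some s})"

end

theory Submission
  imports Defs "HOL-Library.Infinite_Set"
begin

lemma fiber_bij:
  fixes f g :: "nat \<Rightarrow> 'b"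
  assumes "\<And>v. \<exists>h. bij_betw h {i. g i = v} {i. f i = v}"
  shows "\<exists>\<pi>. bij \<pi> \<and> f \<circ> \<pi> = g"
proof -
  define H where "H v = (SOME h. bij_betw h {i. g i = v} {i. f i = v})" for v
  have HB: "bij_betw (H v) {i. g i = v} {i. f i = v}" for v
    unfolding H_def using assms[of v] by (rule someI_ex)
  define \<pi> where "\<pi> i = H (g i) i" for i
  have fp: "f (\<pi> i) = g i" for i
    using bij_betwE[OF HB[of "g i"]] unfolding \<pi>_def by auto
  have "inj \<pi>"
  proof (rule injI)
    fix i j assume e: "\<pi> i = \<pi> j"
    hence "g i = g j" using fp by metis
    thus "i = j" using e bij_betw_imp_inj_on[OF HB[of "g i"]] unfolding \<pi>_def inj_on_def
      by auto
  qed
  moreover have "surj \<pi>"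
  proof -
    { fix k
      have "k \<in> {i. f i = f k}" by simp
      then obtain i where "i \<in> {i. g i = f k}" "H (f k) i = k"
        using bij_betw_imp_surj_on[OF HB[of "f k"]] by (metis imageE)
      hence "k = \<pi> i" unfolding \<pi>_def by simp
      hence "k \<in> range \<pi>" by simp }
    thus ?thesis by auto
  qed
  ultimately show ?thesis using fp by (intro exI[of _ \<pi>]) (auto simp: bij_def)
qed

lemma rename_mem:
  assumes "\<And>a. \<sigma> (\<sigma> a) = a"
  shows "(p, q) \<in> rename_order \<sigma> r \<longleftrightarrow> (\<sigma> p, \<sigma> q) \<in> r"
proof
  assume "(\<sigma> p, \<sigma> q) \<in> r"
  hence "(\<sigma> (\<sigma> p), \<sigma> (\<sigma> q)) \<in> rename_order \<sigma> r" unfolding rename_order_def by force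
  thus "(p, q) \<in> rename_order \<sigma> r" using assms by simp
qed (auto simp: rename_order_def assms)

lemma rename_rename:
  assumes "\<And>a. \<sigma> (\<sigma> a) = a"
  shows "rename_order \<sigma> (rename_order \<sigma> r) = r"
  using rename_mem[OF assms] assms by auto

lemma rename_lin:
  assumes "\<And>a. \<sigma> (\<sigma> a) = a" and "\<And>a. a \<in> X \<Longrightarrow> \<sigma> a \<in> X"
    and "r \<in> lin_orders X"
  shows "rename_order \<sigma> r \<in> lin_orders X"
proof -
  have rm: "\<And>p q. (p, q) \<in> rename_order \<sigma> r \<longleftrightarrow> (\<sigma> p, \<sigma> q) \<in> r"
    using rename_mem[OF assms(1)] .
  have r: "r \<subseteq> X \<times> X" "trans r" "irrefl r" "total_on X r"
    using assms(3) unfolding lin_orders_def strict_linear_order_on_def by auto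
  have "rename_order \<sigma> r \<subseteq> X \<times> X"
  proof
    fix z assume "z \<in> rename_order \<sigma> r"
    then obtain p q where z: "z = (p, q)" "(\<sigma> p, \<sigma> q) \<in> r" using rm by (cases z) auto
    hence "\<sigma> p \<in> X" "\<sigma> q \<in> X" using r(1) by auto
    hence "p \<in> X" "q \<in> X" using assms(1,2) by metis+
    thus "z \<in> X \<times> X" using z by auto
  qed
  moreover have "trans (rename_order \<sigma> r)"
    using r(2) unfolding trans_def using rm by blast
  moreover have "irrefl (rename_order \<sigma> r)"
    using r(3) unfolding irrefl_def using rm by blast
  moreover have "total_on X (rename_order \<sigma> r)"
    unfolding total_on_def
  proof (intro ballI impI)
    fix p q assume "p \<in> X" "q \<in> X" "p \<noteq> q"
    hence "\<sigma> p \<in> X" "\<sigma> q \<in> X" "\<sigma> p \<noteq> \<sigma> q" using assms(1,2) by metis+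
    thus "(p, q) \<in> rename_order \<sigma> r \<or> (q, p) \<in> rename_order \<sigma> r"
      using r(4) rm unfolding total_on_def by blast
  qed
  ultimately show ?thesis
    unfolding lin_orders_def strict_linear_order_on_def by auto
qed

lemma finite_card_bij:
  assumes "finite A" "finite B" "card A = card B"
  shows "\<exists>h. bij_betw h A B"
  using assms by (metis finite_same_card_bij)

theorem proposition1:
  fixes X :: "'a set" and \<Delta> :: "'a profile \<Rightarrow> 'a set" and RU :: "'a profile"
  assumes "finite X"
    and "is_DSF X \<Delta>"
    and "anonymous X \<Delta>"
    and "neutral X \<Delta>"
    and "perfectly_uniform X RU"
  shows "\<Delta> RU = X"
proof -
  have prof: "is_profile X RU" using assms(5) unfolding perfectly_uniform_def by auto
  have sub: "\<Delta> RU \<subseteq> X" and ne: "\<Delta> RU \<noteq> {}"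
    using assms(2) prof unfolding is_DSF_def by auto
  then obtain x where x: "x \<in> \<Delta> RU" by auto
  have "y \<in> \<Delta> RU" if y: "y \<in> X" for y
  proof -
    define \<sigma> where "\<sigma> = Transposition.transpose x y"
    have inv: "\<And>a. \<sigma> (\<sigma> a) = a" unfolding \<sigma>_def by simp
    have xX: "x \<in> X" using x sub by auto
    have perm: "\<sigma> permutes X" unfolding \<sigma>_def using xX y by (rule permutes_swap_id)
    have inX: "\<And>a. a \<in> X \<Longrightarrow> \<sigma> a \<in> X" using perm by (simp add: permutes_in_image)
    define S where "S = rename_profile \<sigma> RU"
    have Si: "S i = Some r \<longleftrightarrow> RU i = Some (rename_order \<sigma> r)" for i r
      unfolding S_def rename_profile_def using rename_rename[OF inv]
      by (cases "RU i") (auto simp: rename_rename[OF inv])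
    have finD: "finite (dom RU)" using prof unfolding is_profile_def by auto
    have ranD: "ran RU \<subseteq> lin_orders X" using prof unfolding is_profile_def by auto
    have "\<exists>h. bij_betw h {i. S i = v} {i. RU i = v}" for v
    proof (cases v)
      case None
      have "{i. RU i = None} = - dom RU" by auto
      hence inf1: "infinite {i. RU i = None}" using finD by (simp add: Finite_Set.finite_compl)
      have "{i. S i = None} = - dom RU" unfolding S_def rename_profile_def by auto
      hence inf2: "infinite {i. S i = None}" using finD by (simp add: Finite_Set.finite_compl)
      obtain a :: "nat \<Rightarrow> nat" where a: "bij_betw a UNIV {i. RU i = None}" using bij_enumerate[OF inf1] by blast
      obtain b :: "nat \<Rightarrow> nat" where b: "bij_betw b UNIV {i. S i = None}" using bij_enumerate[OF inf2] by blast
      have "bij_betw (a \<circ> the_inv_into UNIV b) {i. S i = None} {i. RU i = None}"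
        using bij_betw_trans[OF bij_betw_the_inv_into[OF b] a] .
      thus ?thesis using None by blast
    next
      case (Some r)
      have eq: "{i. S i = v} = {i. RU i = Some (rename_order \<sigma> r)}" using Si Some by auto
      have f1: "finite {i. RU i = Some q}" for q
        by (rule finite_subset[OF _ finD]) auto
      show ?thesis
      proof (cases "r \<in> lin_orders X")
        case True
        have "rename_order \<sigma> r \<in> lin_orders X" using rename_lin[OF inv inX True] by blast
        hence "card {i. RU i = Some (rename_order \<sigma> r)} = card {i. RU i = Some r}"
          using assms(5) True unfolding perfectly_uniform_def by blast
        hence "\<exists>h. bij_betw h {i. RU i = Some (rename_order \<sigma> r)} {i. RU i = Some r}"
          by (intro finite_card_bij f1)
        thus ?thesis using eq Some by simp
      next
        case False
        have e1: "{i. RU i = Some r} = {}" using False ranD by (auto simp: ran_def)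
        have "rename_order \<sigma> r \<notin> lin_orders X"
        proof
          assume "rename_order \<sigma> r \<in> lin_orders X"
          from rename_lin[OF inv inX this] have "r \<in> lin_orders X" by (simp add: rename_rename[OF inv])
          thus False using False by simp
        qed
        hence "{i. RU i = Some (rename_order \<sigma> r)} = {}" using ranD by (auto simp: ran_def)
        thus ?thesis using eq e1 Some by (simp add: bij_betw_def)
      qed
    qed
    then obtain \<pi> where \<pi>: "bij \<pi>" "RU \<circ> \<pi> = S" using fiber_bij[of S RU] by blast
    have "\<Delta> (RU \<circ> \<pi>) = \<Delta> RU" using assms(3) prof \<pi>(1) unfolding anonymous_def by blast
    hence "\<Delta> S = \<Delta> RU" using \<pi>(2) by simp
    moreover have "\<Delta> S = \<sigma> ` \<Delta> RU" using assms(4) prof perm unfolding neutral_def S_def by simp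
    ultimately have "\<sigma> x \<in> \<Delta> RU" using x by auto
    moreover have "\<sigma> x = y" unfolding \<sigma>_def by simp
    ultimately show ?thesis by simp
  qed
  thus ?thesis using sub by auto
qed

end
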